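(* Let $1\le r\le n$ be integers and $A\in RB(r,n)$. Then $$\mathrm{per}\!\left(\tfrac1r A\right)\ \le\ (\sqrt2)^n\, F\!\left(\tfrac1r A\right).$$
   Context: $RB(r,n)$ is the set of $n\times n$ $0/1$ matrices all of whose row and column sums equal $r$. $\mathrm{per}$ is the permanent. For a doubly-stochastic $n\times n$ matrix $P$, $F(P)=\prod_{1\le i,j\le n}(1-P(i,j))^{1-P(i,j)}$, with $0^0=1$. *)

theory Defs
  imports "HOL-Analysis.Analysis" "HOL-Combinatorics.Permutations"
begin

text \<open>n x n matrices are represented as functions nat => nat => real,
  indices ranging over {0..<n}.\<close>

definition RB :: "nat \<Rightarrow> nat \<Rightarrow> (nat \<Rightarrow> nat \<Rightarrow> real) set" where
  "RB r n = {A. (\<forall>i<n. \<forall>j<n. A i j = 0 \<or> A i j = 1)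
              \<and> (\<forall>i<n. (\<Sum>j<n. A i j) = real r)
              \<and> (\<forall>j<n. (\<Sum>i<n. A i j) = real r)}"

definition per :: "nat \<Rightarrow> (nat \<Rightarrow> nat \<Rightarrow> real) \<Rightarrow> real" where
  "per n A = (\<Sum>\<sigma> | \<sigma> permutes {..<n}. \<Prod>i<n. A i (\<sigma> i))"

definition selfpow :: "real \<Rightarrow> real" where
  "selfpow x = (if x = 0 then 1 else x powr x)"

definition F :: "nat \<Rightarrow> (nat \<Rightarrow> nat \<Rightarrow> real) \<Rightarrow> real" where
  "F n P = (\<Prod>i<n. \<Prod>j<n. selfpow (1 - P i j))"

end

theory Submission
  imports Defs
begin


definition Mset :: "(nat \<Rightarrow> nat \<Rightarrow> bool) \<Rightarrow> nat set \<Rightarrow> nat set \<Rightarrow> (nat \<Rightarrow> nat) set" where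
  "Mset a R C = {f \<in> R \<rightarrow>\<^sub>E C. bij_betw f R C \<and> (\<forall>i\<in>R. a i (f i))}"

definition rs :: "(nat \<Rightarrow> nat \<Rightarrow> bool) \<Rightarrow> nat \<Rightarrow> nat set \<Rightarrow> nat" where
  "rs a j C = card {k\<in>C. a j k}"

definition G :: "nat \<Rightarrow> real" where "G m = ln (fact m) / m"

lemma finite_Mset: "finite R \<Longrightarrow> finite C \<Longrightarrow> finite (Mset a R C)"
  unfolding Mset_def by (rule finite_subset[of _ "R \<rightarrow>\<^sub>E C"]) (auto intro: finite_PiE)

lemma G_rec: "m \<ge> 1 \<Longrightarrow> real m * G m = ln (real m) + real (m - 1) * G (m - 1)"
proof -
  assume m: "m \<ge> 1"
  then obtain p where p: "m = Suc p" by (cases m) auto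
  have f: "(fact m :: real) = real m * fact p" unfolding p by simp
  have "real m * G m = ln (fact m)" using m by (simp add: G_def)
  also have "\<dots> = ln (real m) + ln (fact p)" using m f by (simp add: ln_mult)
  also have "ln (fact p) = real p * G p"
    by (cases "p = 0") (simp_all add: G_def)
  finally show ?thesis using p by simp
qed

lemma fiber_card:
  assumes "finite R" "i \<in> R" "k \<in> C" "a i k"
  shows "card {\<sigma>\<in>Mset a R C. \<sigma> i = k} = card (Mset a (R - {i}) (C - {k}))"
proof (rule bij_betw_same_card[of "\<lambda>\<sigma>. \<sigma>(i := undefined)"], rule bij_betw_byWitness[of _ "\<lambda>\<tau>. \<tau>(i := k)"])
  show "\<forall>\<sigma>\<in>{\<sigma> \<in> Mset a R C. \<sigma> i = k}. (\<sigma>(i := undefined))(i := k) = \<sigma>" by auto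
  show "\<forall>\<tau>\<in>Mset a (R - {i}) (C - {k}). (\<tau>(i := k))(i := undefined) = \<tau>"
  proof
    fix \<tau> assume "\<tau> \<in> Mset a (R - {i}) (C - {k})"
    then have "\<tau> \<in> (R - {i}) \<rightarrow>\<^sub>E (C - {k})" by (simp add: Mset_def)
    then have "\<tau> i = undefined" by (meson DiffD2 PiE_arb singletonI)
    then show "(\<tau>(i := k))(i := undefined) = \<tau>" by (simp add: fun_eq_iff)
  qed
  show "(\<lambda>\<sigma>. \<sigma>(i := undefined)) ` {\<sigma> \<in> Mset a R C. \<sigma> i = k} \<subseteq> Mset a (R - {i}) (C - {k})"
  proof safe
    fix \<sigma> assume s: "\<sigma> \<in> Mset a R C" "k = \<sigma> i"
    have b: "bij_betw \<sigma> R C" using s by (auto simp: Mset_def)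
    have b2: "bij_betw \<sigma> (R - {i}) (C - {\<sigma> i})"
      using bij_betw_DiffI[OF b, of "{i}" "{\<sigma> i}"] assms s by auto
    have b3: "bij_betw (\<sigma>(i := undefined)) (R - {i}) (C - {\<sigma> i})"
      by (rule bij_betw_cong[THEN iffD1, OF _ b2]) auto
    have pe: "\<sigma> \<in> R \<rightarrow>\<^sub>E C" and aa: "\<forall>i\<in>R. a i (\<sigma> i)" using s by (auto simp: Mset_def)
    have "\<sigma>(i := undefined) \<in> (R - {i}) \<rightarrow>\<^sub>E (C - {\<sigma> i})"
      using pe b2 unfolding bij_betw_def PiE_def extensional_def by auto
    then show "\<sigma>(i := undefined) \<in> Mset a (R - {i}) (C - {\<sigma> i})"
      using b3 aa unfolding Mset_def by auto
  qed
  show "(\<lambda>\<tau>. \<tau>(i := k)) ` Mset a (R - {i}) (C - {k}) \<subseteq> {\<sigma> \<in> Mset a R C. \<sigma> i = k}"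
  proof safe
    fix \<tau> assume t: "\<tau> \<in> Mset a (R - {i}) (C - {k})"
    have b: "bij_betw \<tau> (R - {i}) (C - {k})" using t by (auto simp: Mset_def)
    have b2: "bij_betw (\<tau>(i := k)) (R - {i}) (C - {k})"
      by (rule bij_betw_cong[THEN iffD1, OF _ b]) auto
    have b3: "bij_betw (\<tau>(i := k)) ((R - {i}) \<union> {i}) ((C - {k}) \<union> {(\<tau>(i := k)) i})"
      by (rule notIn_Un_bij_betw) (use b2 in auto)
    have "(R - {i}) \<union> {i} = R" "(C - {k}) \<union> {(\<tau>(i := k)) i} = C" using assms by auto
    with b3 have b4: "bij_betw (\<tau>(i := k)) R C" by simp
    have pe: "\<tau> \<in> (R - {i}) \<rightarrow>\<^sub>E (C - {k})" and aa: "\<forall>j\<in>R - {i}. a j (\<tau> j)"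
      using t by (auto simp: Mset_def)
    have "\<tau>(i := k) \<in> R \<rightarrow>\<^sub>E C"
      using pe assms unfolding PiE_def extensional_def by auto
    then show "\<tau>(i := k) \<in> Mset a R C" using b4 aa assms unfolding Mset_def by auto
    show "(\<tau>(i := k)) i = k" by simp
  qed
qed


lemma ln_lower: "0 < (y::real) \<Longrightarrow> 1 - 1 / y \<le> ln y"
proof -
  assume y: "0 < y"
  have "ln (1 / y) \<le> 1 / y - 1" using y by (intro ln_le_minus_one) simp
  moreover have "ln (1 / y) = - ln y" using y by (simp add: ln_div)
  ultimately show ?thesis by simp
qed

lemma gibbs_term:
  fixes t T m :: real
  assumes "0 \<le> t" "0 < T" "0 < m"
  shows "t * ln T - t * ln m + t - T / m \<le> t * ln t"
proof (cases "t = 0")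
  case True then show ?thesis using assms by simp
next
  case False
  then have t: "t > 0" using assms by simp
  have "1 - 1 / (t * m / T) \<le> ln (t * m / T)" using t assms by (intro ln_lower) simp
  also have "ln (t * m / T) = ln t + ln m - ln T" using t assms by (simp add: ln_div ln_mult)
  finally have "t * (1 - 1 / (t * m / T)) \<le> t * (ln t + ln m - ln T)"
    using t by (intro mult_left_mono) auto
  moreover have "t * (1 - 1 / (t * m / T)) = t - T / m" using t assms by (simp add: field_simps)
  ultimately show ?thesis by (simp add: algebra_simps)
qed

lemma gibbs:
  fixes t :: "nat \<Rightarrow> nat"
  assumes fK: "finite K" and ne: "K \<noteq> {}" and TT: "T = (\<Sum>k\<in>K. real (t k))" and Tp: "T > 0"
  shows "T * ln T - T * ln (real (card K)) \<le> (\<Sum>k\<in>K. real (t k) * ln (real (t k)))"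
proof -
  define m where "m = real (card K)"
  have m: "m > 0" using fK ne by (simp add: m_def card_gt_0_iff)
  have "(\<Sum>k\<in>K. real (t k) * ln T - real (t k) * ln m + real (t k) - T / m)
        \<le> (\<Sum>k\<in>K. real (t k) * ln (real (t k)))"
    by (rule sum_mono, rule gibbs_term) (use m Tp in auto)
  moreover have "(\<Sum>k\<in>K. real (t k) * ln T - real (t k) * ln m + real (t k) - T / m)
       = T * ln T - T * ln m + T - m * (T / m)"
    by (simp add: sum.distrib sum_subtractf TT sum_distrib_right m_def)
  moreover have "m * (T / m) = T" using m by simp
  ultimately show ?thesis by (simp add: m_def)
qed

lemma fiber_sum:
  fixes h :: "nat \<Rightarrow> real"
  assumes "finite R" "finite C" "i \<in> R"
  shows "(\<Sum>\<sigma>\<in>Mset a R C. h (\<sigma> i)) = (\<Sum>k\<in>{k\<in>C. a i k}. real (card {\<sigma>\<in>Mset a R C. \<sigma> i = k}) * h k)"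
proof -
  have img: "(\<lambda>\<sigma>. \<sigma> i) ` Mset a R C \<subseteq> {k\<in>C. a i k}"
    using assms by (auto simp: Mset_def)
  have "(\<Sum>\<sigma>\<in>Mset a R C. h (\<sigma> i)) = (\<Sum>k\<in>{k\<in>C. a i k}. \<Sum>\<sigma>\<in>{\<sigma>. \<sigma> \<in> Mset a R C \<and> \<sigma> i = k}. h (\<sigma> i))"
    by (rule sum.group[symmetric]) (use assms finite_Mset img in auto)
  also have "\<dots> = (\<Sum>k\<in>{k\<in>C. a i k}. real (card {\<sigma>\<in>Mset a R C. \<sigma> i = k}) * h k)"
  proof (rule sum.cong[OF refl])
    fix k
    have "(\<Sum>\<sigma>\<in>{\<sigma>. \<sigma> \<in> Mset a R C \<and> \<sigma> i = k}. h (\<sigma> i)) = (\<Sum>\<sigma>\<in>{\<sigma>. \<sigma> \<in> Mset a R C \<and> \<sigma> i = k}. h k)"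
      by (rule sum.cong) auto
    then show "(\<Sum>\<sigma>\<in>{\<sigma>. \<sigma> \<in> Mset a R C \<and> \<sigma> i = k}. h (\<sigma> i)) = real (card {\<sigma>\<in>Mset a R C. \<sigma> i = k}) * h k"
      by simp
  qed
  finally show ?thesis .
qed

lemma count_j:
  assumes s: "\<sigma> \<in> Mset a R C" and j: "j \<in> R" and fR: "finite R" and fC: "finite C"
  shows "(\<Sum>i\<in>R-{j}. G (rs a j (C - {\<sigma> i})))
     = real (card C - rs a j C) * G (rs a j C) + real (rs a j C - 1) * G (rs a j C - 1)"
proof -
  have b: "bij_betw \<sigma> R C" and aj: "a j (\<sigma> j)" using s j by (auto simp: Mset_def)
  have sj: "\<sigma> j \<in> C" using b j by (auto simp: bij_betw_def)
  have b2: "bij_betw \<sigma> (R - {j}) (C - {\<sigma> j})"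
    using bij_betw_DiffI[OF b, of "{j}" "{\<sigma> j}"] j sj by auto
  define h where "h k = G (rs a j (C - {k}))" for k
  have "(\<Sum>i\<in>R-{j}. G (rs a j (C - {\<sigma> i}))) = (\<Sum>i\<in>R-{j}. h (\<sigma> i))" by (simp add: h_def)
  also have "\<dots> = (\<Sum>k\<in>C-{\<sigma> j}. h k)" by (rule sum.reindex_bij_betw[OF b2])
  also have "\<dots> = (\<Sum>k\<in>C-{\<sigma> j}. if a j k then G (rs a j C - 1) else G (rs a j C))"
  proof (rule sum.cong[OF refl])
    fix k assume k: "k \<in> C - {\<sigma> j}"
    have e: "{x\<in>C - {k}. a j x} = {x\<in>C. a j x} - {k}" by auto
    have "rs a j (C - {k}) = (if a j k then rs a j C - 1 else rs a j C)"
      unfolding rs_def e using k fC by (simp add: card_Diff_singleton_if)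
    then show "h k = (if a j k then G (rs a j C - 1) else G (rs a j C))" by (simp add: h_def)
  qed
  also have "\<dots> = real (card ((C - {\<sigma> j}) \<inter> {k. a j k})) * G (rs a j C - 1)
                 + real (card ((C - {\<sigma> j}) \<inter> - {k. a j k})) * G (rs a j C)"
    using fC by (simp add: sum.If_cases)
  also have "card ((C - {\<sigma> j}) \<inter> {k. a j k}) = rs a j C - 1"
  proof -
    have "(C - {\<sigma> j}) \<inter> {k. a j k} = {k\<in>C. a j k} - {\<sigma> j}" by auto
    then show ?thesis using sj aj fC by (simp add: rs_def card_Diff_singleton_if)
  qed
  also have "card ((C - {\<sigma> j}) \<inter> - {k. a j k}) = card C - rs a j C"
  proof -
    have "(C - {\<sigma> j}) \<inter> - {k. a j k} = C - {k\<in>C. a j k}" using aj by auto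
    then show ?thesis using fC by (simp add: rs_def card_Diff_subset)
  qed
  finally show ?thesis by simp
qed

lemma swap_off:
  fixes f :: "nat \<Rightarrow> nat \<Rightarrow> real"
  assumes "finite R"
  shows "(\<Sum>i\<in>R. \<Sum>j\<in>R-{i}. f i j) = (\<Sum>j\<in>R. \<Sum>i\<in>R-{j}. f i j)"
proof -
  have "(\<Sum>i\<in>R. \<Sum>j\<in>R-{i}. f i j) = (\<Sum>i\<in>R. \<Sum>j\<in>{y. y \<in> R \<and> i \<noteq> y}. f i j)"
    by (intro sum.cong) auto
  also have "\<dots> = (\<Sum>j\<in>R. \<Sum>i\<in>{x. x \<in> R \<and> x \<noteq> j}. f i j)"
    by (rule sum.swap_restrict) (use assms in auto)
  also have "\<dots> = (\<Sum>j\<in>R. \<Sum>i\<in>R-{j}. f i j)"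
    by (intro sum.cong) auto
  finally show ?thesis .
qed

lemma ln_le_of_le_exp: "0 < (x::real) \<Longrightarrow> x \<le> exp y \<Longrightarrow> ln x \<le> y"
  by (metis ln_exp ln_le_cancel_iff exp_gt_zero)

lemma bregman:
  "card R = N \<Longrightarrow> finite R \<Longrightarrow> finite C \<Longrightarrow>
   real (card (Mset a R C)) \<le> exp (\<Sum>j\<in>R. G (rs a j C))"
proof (induction N arbitrary: R C)
  case 0
  then have R: "R = {}" by auto
  have "Mset a R C \<subseteq> {\<lambda>_. undefined}" unfolding R Mset_def by auto
  then have "card (Mset a R C) \<le> card {\<lambda>_::nat. undefined::nat}" by (intro card_mono) simp_all
  then have "card (Mset a R C) \<le> 1" by simp
  then show ?case using R by simp
next
  case (Suc N)
  note fR = Suc.prems(2) and fC = Suc.prems(3)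
  define M where "M = Mset a R C"
  define P where "P = real (card M)"
  define S where "S = (\<Sum>j\<in>R. G (rs a j C))"
  have finM: "finite M" using fR fC by (simp add: M_def finite_Mset)
  show ?case
  proof (cases "card M = 0")
    case True then show ?thesis by (simp add: M_def)
  next
    case False
    then obtain \<sigma>0 where s0: "\<sigma>0 \<in> M" using finM by fastforce
    have Ppos: "P > 0" using False by (simp add: P_def)
    have "bij_betw \<sigma>0 R C" using s0 by (simp add: M_def Mset_def)
    then have bC: "card C = Suc N" using Suc.prems(1) by (simp add: bij_betw_same_card)
    define c where "c i k = card {\<sigma>\<in>M. \<sigma> i = k}" for i k
    define K where "K i = {k\<in>C. a i k}" for i
    have stepi: "P * ln P \<le> (\<Sum>\<sigma>\<in>M. ln (real (rs a i C)) + ln (real (c i (\<sigma> i))))"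
      if i: "i \<in> R" for i
    proof -
      have fK: "finite (K i)" using fC by (simp add: K_def)
      have sumP: "P = (\<Sum>k\<in>K i. real (c i k))"
        using fiber_sum[OF fR fC i, of "\<lambda>_. 1" a] by (simp add: P_def M_def c_def K_def)
      have "\<sigma>0 \<in> R \<rightarrow>\<^sub>E C" "a i (\<sigma>0 i)" using s0 i by (auto simp: M_def Mset_def)
      then have "\<sigma>0 i \<in> K i" using i unfolding K_def by (auto intro: PiE_mem)
      then have Kne: "K i \<noteq> {}" by blast
      have cardK: "card (K i) = rs a i C" by (simp add: rs_def K_def)
      have g: "P * ln P - P * ln (real (card (K i))) \<le> (\<Sum>k\<in>K i. real (c i k) * ln (real (c i k)))"
        by (rule gibbs[OF fK Kne sumP Ppos])
      have fs: "(\<Sum>k\<in>K i. real (c i k) * ln (real (c i k))) = (\<Sum>\<sigma>\<in>M. ln (real (c i (\<sigma> i))))"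
        using fiber_sum[OF fR fC i, of "\<lambda>k. ln (real (c i k))" a] by (simp add: M_def c_def K_def)
      have "(\<Sum>\<sigma>\<in>M. ln (real (rs a i C)) + ln (real (c i (\<sigma> i))))
          = P * ln (real (rs a i C)) + (\<Sum>\<sigma>\<in>M. ln (real (c i (\<sigma> i))))"
        by (simp add: sum.distrib P_def)
      then show ?thesis using g[unfolded cardK] fs by linarith
    qed
    have bound: "(\<Sum>i\<in>R. ln (real (rs a i C)) + ln (real (c i (\<sigma> i)))) \<le> real (Suc N) * S"
      if s: "\<sigma> \<in> M" for \<sigma>
    proof -
      have b: "bij_betw \<sigma> R C" and aa: "\<forall>i\<in>R. a i (\<sigma> i)" using s by (auto simp: M_def Mset_def)
      have IHi: "ln (real (c i (\<sigma> i))) \<le> (\<Sum>j\<in>R-{i}. G (rs a j (C - {\<sigma> i})))" if i: "i \<in> R" for i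
      proof -
        have si: "\<sigma> i \<in> C" using b i by (auto simp: bij_betw_def)
        have ce: "c i (\<sigma> i) = card (Mset a (R - {i}) (C - {\<sigma> i}))"
          unfolding c_def M_def by (rule fiber_card[OF fR i si]) (use aa i in auto)
        have "c i (\<sigma> i) \<noteq> 0"
        proof -
          have "finite {\<tau>\<in>M. \<tau> i = \<sigma> i}" using finM by simp
          moreover have "\<sigma> \<in> {\<tau>\<in>M. \<tau> i = \<sigma> i}" using s by simp
          ultimately show ?thesis unfolding c_def by (metis card_0_eq empty_iff)
        qed
        then have pos: "real (c i (\<sigma> i)) > 0" by simp
        have "real (c i (\<sigma> i)) \<le> exp (\<Sum>j\<in>R-{i}. G (rs a j (C - {\<sigma> i})))"
          unfolding ce by (rule Suc.IH) (use Suc.prems i fC in auto)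
        then show ?thesis using pos by (rule ln_le_of_le_exp[rotated])
      qed
      have "(\<Sum>i\<in>R. ln (real (c i (\<sigma> i)))) \<le> (\<Sum>i\<in>R. \<Sum>j\<in>R-{i}. G (rs a j (C - {\<sigma> i})))"
        by (rule sum_mono) (rule IHi)
      also have "\<dots> = (\<Sum>j\<in>R. \<Sum>i\<in>R-{j}. G (rs a j (C - {\<sigma> i})))"
        by (rule swap_off[OF fR])
      also have "\<dots> = (\<Sum>j\<in>R. real (card C - rs a j C) * G (rs a j C) + real (rs a j C - 1) * G (rs a j C - 1))"
        by (rule sum.cong[OF refl], rule count_j) (use s fR fC in \<open>auto simp: M_def\<close>)
      finally have A: "(\<Sum>i\<in>R. ln (real (c i (\<sigma> i)))) \<le>
          (\<Sum>j\<in>R. real (card C - rs a j C) * G (rs a j C) + real (rs a j C - 1) * G (rs a j C - 1))" .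
      have B: "ln (real (rs a j C)) + (real (card C - rs a j C) * G (rs a j C) + real (rs a j C - 1) * G (rs a j C - 1))
            = real (Suc N) * G (rs a j C)" if j: "j \<in> R" for j
      proof -
        have "\<sigma> j \<in> {k\<in>C. a j k}" using b aa j by (auto simp: bij_betw_def)
        then have r1: "rs a j C \<ge> 1" using fC unfolding rs_def
          using card_gt_0_iff[of "{k\<in>C. a j k}"] by fastforce
        have r2: "rs a j C \<le> card C" unfolding rs_def using fC by (intro card_mono) auto
        have "real (rs a j C) * G (rs a j C) = ln (real (rs a j C)) + real (rs a j C - 1) * G (rs a j C - 1)"
          by (rule G_rec[OF r1])
        moreover have "real (card C - rs a j C) * G (rs a j C) = real (Suc N) * G (rs a j C) - real (rs a j C) * G (rs a j C)"
          using r2 bC by (simp add: of_nat_diff left_diff_distrib)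
        ultimately show ?thesis by linarith
      qed
      have "(\<Sum>i\<in>R. ln (real (rs a i C)) + ln (real (c i (\<sigma> i))))
          = (\<Sum>i\<in>R. ln (real (rs a i C))) + (\<Sum>i\<in>R. ln (real (c i (\<sigma> i))))" by (simp add: sum.distrib)
      also have "\<dots> \<le> (\<Sum>i\<in>R. ln (real (rs a i C))) +
          (\<Sum>j\<in>R. real (card C - rs a j C) * G (rs a j C) + real (rs a j C - 1) * G (rs a j C - 1))"
        using A by simp
      also have "\<dots> = (\<Sum>j\<in>R. ln (real (rs a j C)) + (real (card C - rs a j C) * G (rs a j C) + real (rs a j C - 1) * G (rs a j C - 1)))"
        by (simp add: sum.distrib)
      also have "\<dots> = (\<Sum>j\<in>R. real (Suc N) * G (rs a j C))" by (rule sum.cong[OF refl]) (rule B)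
      also have "\<dots> = real (Suc N) * S" by (simp add: S_def sum_distrib_left)
      finally show ?thesis .
    qed
    have "real (Suc N) * (P * ln P) = (\<Sum>i\<in>R. P * ln P)" using Suc.prems by simp
    also have "\<dots> \<le> (\<Sum>i\<in>R. \<Sum>\<sigma>\<in>M. ln (real (rs a i C)) + ln (real (c i (\<sigma> i))))"
      by (rule sum_mono) (rule stepi)
    also have "\<dots> = (\<Sum>\<sigma>\<in>M. \<Sum>i\<in>R. ln (real (rs a i C)) + ln (real (c i (\<sigma> i))))"
      by (rule sum.swap)
    also have "\<dots> \<le> (\<Sum>\<sigma>\<in>M. real (Suc N) * S)"
      by (rule sum_mono) (rule bound)
    also have "\<dots> = real (Suc N) * (P * S)" by (simp add: P_def)
    finally have "P * ln P \<le> P * S" by simp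
    then have "ln P \<le> S" using Ppos by simp
    then have "P \<le> exp S" using Ppos by (metis exp_ln exp_le_cancel_iff)
    then show ?thesis by (simp add: P_def S_def M_def)
  qed
qed



lemma ln2_ge: "2/3 \<le> ln (2::real)"
proof -
  have "exp (2::real) = exp 1 ^ 2" using exp_of_nat_mult[of 2 "1::real"] by simp
  also have "\<dots> \<le> (272/100)^2" using e_less_272 by (intro power_mono) auto
  also have "\<dots> \<le> 2 ^ 3" by (simp add: eval_nat_numeral)
  finally have "exp 2 \<le> (2::real) ^ 3" .
  then have "ln (exp 2) \<le> ln ((2::real) ^ 3)" by (subst ln_le_cancel_iff) auto
  then show ?thesis using ln_realpow[of "2::real" 3] by simp
qed

lemma lnfact_bound: "r \<ge> 6 \<Longrightarrow> ln (fact r :: real) \<le> real r / 2 * ln 2 + real r * ln (real r) - real r"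
proof (induction r rule: nat_induct_at_least)
  case base
  have e6: "exp (6::real) \<le> (272/100)^6"
    using exp_of_nat_mult[of 6 "1::real"] e_less_272 power_mono[of "exp 1" "272/100::real" 6] by simp
  have "(fact 6 :: real) = 720" by (simp add: fact_numeral)
  then have "ln (fact 6 :: real) + 6 = ln (720 * exp 6)" by (simp add: ln_mult)
  also have "\<dots> \<le> ln (720 * (272/100)^6)" using e6 by (subst ln_le_cancel_iff) auto
  also have "\<dots> \<le> ln (2^3 * 6^6)" by (subst ln_le_cancel_iff) (simp_all add: eval_nat_numeral) 
  also have "\<dots> = 3 * ln 2 + 6 * ln 6"
    using ln_mult[of "2^3::real" "6^6"] ln_realpow[of "2::real" 3] ln_realpow[of "6::real" 6] by simp
  finally show ?case by simp
next
  case (Suc r)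
  have rpos: "real r > 0" using Suc.hyps by simp
  have "1 + real r * (1 / real r) \<le> (1 + 1 / real r) ^ r"
    by (rule Bernoulli_inequality) (use rpos in \<open>smt (verit) divide_nonneg_nonneg of_nat_0_le_iff\<close>)
  then have "2 \<le> (1 + 1 / real r) ^ r" using rpos by simp
  then have "ln 2 \<le> ln ((1 + 1 / real r) ^ r)" by (subst ln_le_cancel_iff) (use rpos in auto)
  also have "\<dots> = real r * (ln (real r + 1) - ln (real r))"
    using rpos by (simp add: ln_realpow ln_div field_simps)
  finally have b: "ln 2 \<le> real r * (ln (real r + 1) - ln (real r))" .
  have "ln (fact (Suc r) :: real) = ln (real r + 1) + ln (fact r)"
    by (simp add: ln_mult add.commute)
  also have "\<dots> \<le> ln (real r + 1) + (real r / 2 * ln 2 + real r * ln (real r) - real r)"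
    using Suc.IH by simp
  also have "\<dots> \<le> real (Suc r) / 2 * ln 2 + real (Suc r) * ln (real (Suc r)) - real (Suc r)"
    using b ln2_ge by (simp add: algebra_simps add_divide_distrib)
  finally show ?case .
qed



lemma num_small3: "ln (fact 3 :: real) \<le> 3 * ln 3 + 3/2 * ln 2 + 3 * 2 * (ln 2 - ln 3)"
proof -
  have f: "(fact 3 :: real) = 2 * 3" by (simp add: fact_numeral)
  have a: "ln ((3::real)^8) \<le> ln (2^13)" by (subst ln_le_cancel_iff) (simp_all add: eval_nat_numeral)
  have "ln (fact 3 :: real) = ln 2 + ln 3" unfolding f by (rule ln_mult_pos) simp_all
  moreover have "ln ((3::real)^8) = 8 * ln 3" "ln ((2::real)^13) = 13 * ln 2" by (simp_all only: ln_realpow)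
  ultimately show ?thesis using a by (simp add: algebra_simps)
qed

lemma num_small4: "ln (fact 4 :: real) \<le> 4 * ln 4 + 4/2 * ln 2 + 4 * 3 * (ln 3 - ln 4)"
proof -
  have f: "(fact 4 :: real) = 2^3 * 3" by (simp add: fact_numeral)
  have a: "ln ((2::real)^17) \<le> ln (3^11)" by (subst ln_le_cancel_iff) (simp_all add: eval_nat_numeral)
  have "ln (fact 4 :: real) = ln (2^3) + ln 3" unfolding f by (rule ln_mult_pos) simp_all
  moreover have "ln ((3::real)^11) = 11 * ln 3" "ln ((2::real)^17) = 17 * ln 2" "ln ((2::real)^3) = 3 * ln 2"
    by (simp_all only: ln_realpow)
  moreover have "ln (4::real) = 2 * ln 2" using ln_realpow[of "2::real" 2] by simp
  ultimately show ?thesis using a by (simp add: algebra_simps)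
qed


lemma num_small5: "ln (fact 5 :: real) \<le> 5 * ln 5 + 5/2 * ln 2 + 5 * 4 * (ln 4 - ln 5)"
proof -
  have f: "(fact 5 :: real) = 2^3 * (3 * 5)" by (simp add: fact_numeral)
  have a: "ln ((5::real)^32 * 3^2) \<le> ln (2^79)" by (subst ln_le_cancel_iff) (simp_all add: eval_nat_numeral)
  have "ln (fact 5 :: real) = ln (2^3) + (ln 3 + ln 5)" unfolding f
    by (subst ln_mult_pos, simp, simp, subst ln_mult_pos) simp_all
  moreover have "ln ((5::real)^32 * 3^2) = ln (5^32) + ln (3^2)" by (rule ln_mult_pos) simp_all
  moreover have "ln ((5::real)^32) = 32 * ln 5" "ln ((3::real)^2) = 2 * ln 3" "ln ((2::real)^79) = 79 * ln 2"
    "ln ((2::real)^3) = 3 * ln 2" by (simp_all only: ln_realpow)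
  moreover have "ln (4::real) = 2 * ln 2" using ln_realpow[of "2::real" 2] by simp
  ultimately show ?thesis using a by (simp add: algebra_simps)
qed

lemma num_main:
  assumes r: "r \<ge> 2"
  shows "ln (fact r :: real) \<le> real r * ln (real r) + real r / 2 * ln 2
           + real r * (real r - 1) * (ln (real r - 1) - ln (real r))"
proof (cases "r \<ge> 6")
  case True
  have r1: "real r - 1 > 0" using r by simp
  have "ln (real r / (real r - 1)) \<le> real r / (real r - 1) - 1" using r1 by (intro ln_le_minus_one) simp
  moreover have "ln (real r / (real r - 1)) = ln (real r) - ln (real r - 1)" using r1 by (simp add: ln_divide_pos)
  moreover have "real r / (real r - 1) - 1 = 1 / (real r - 1)" using r1 by (simp add: field_simps)
  ultimately have "(real r - 1) * (ln (real r) - ln (real r - 1)) \<le> (real r - 1) * (1 / (real r - 1))"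
    using r1 by (intro mult_left_mono) auto
  then have "(real r - 1) * (ln (real r) - ln (real r - 1)) \<le> 1" using r1 by simp
  then have "real r * ((real r - 1) * (ln (real r) - ln (real r - 1))) \<le> real r * 1"
    by (intro mult_left_mono) auto
  then have "- real r \<le> real r * (real r - 1) * (ln (real r - 1) - ln (real r))"
    by (simp add: algebra_simps)
  then show ?thesis using lnfact_bound[OF True] by linarith
next
  case False
  then have "r = 2 \<or> r = 3 \<or> r = 4 \<or> r = 5" using r by auto
  then show ?thesis
  proof (elim disjE)
    assume "r = 2" then show ?thesis by simp
  next
    assume "r = 3" then show ?thesis using num_small3 by simp
  next
    assume "r = 4" then show ?thesis using num_small4 by simp
  next
    assume "r = 5" then show ?thesis using num_small5 by simp
  qed
qed

lemma key:
  assumes r: "r \<ge> 1"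
  shows "exp (G r) \<le> real r * sqrt 2 * selfpow (1 - 1 / real r) ^ r"
proof (cases "r = 1")
  case True then show ?thesis by (simp add: G_def selfpow_def)
next
  case False
  then have r2: "r \<ge> 2" using r by simp
  define x where "x = 1 - 1 / real r"
  have x: "0 < x" using r2 by (simp add: x_def field_simps)
  have "selfpow x ^ r = exp (x * ln x) ^ r" using x by (simp add: selfpow_def powr_def)
  also have "\<dots> = exp (real r * (x * ln x))" by (simp add: exp_of_nat_mult)
  finally have s: "selfpow x ^ r = exp (real r * (x * ln x))" .
  have "real r * sqrt 2 = exp (ln (real r) + ln 2 / 2)" using r
    by (simp add: exp_add ln_sqrt[symmetric])
  then have rhs: "real r * sqrt 2 * selfpow x ^ r = exp (ln (real r) + ln 2 / 2 + real r * (x * ln x))"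
    using s by (simp add: exp_add)
  have rx: "real r * x = real r - 1" using r2 by (simp add: x_def field_simps)
  have lx: "ln x = ln (real r - 1) - ln (real r)"
  proof -
    have "x = (real r - 1) / real r" using r2 by (simp add: x_def field_simps)
    then show ?thesis using r2 by (simp add: ln_divide_pos)
  qed
  have "G r \<le> ln (real r) + ln 2 / 2 + real r * (x * ln x)"
  proof -
    have "real r * (x * ln x) = (real r - 1) * (ln (real r - 1) - ln (real r))"
      using rx lx by (simp add: mult.assoc[symmetric])
    moreover have "G r = ln (fact r) / real r" by (simp add: G_def)
    moreover have "ln (fact r) / real r \<le> ln (real r) + ln 2 / 2 + (real r - 1) * (ln (real r - 1) - ln (real r))"
      using num_main[OF r2] r2 by (simp add: divide_simps algebra_simps)
    ultimately show ?thesis by simp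
  qed
  then show ?thesis unfolding rhs x_def[symmetric] by simp
qed


lemma per_eq:
  assumes r: "r \<ge> 1" and A01: "\<forall>i<n. \<forall>j<n. A i j = 0 \<or> A i j = 1"
  shows "per n (\<lambda>i j. A i j / real r) =
    real (card {\<sigma>. \<sigma> permutes {..<n} \<and> (\<forall>i<n. A i (\<sigma> i) = 1)}) / real r ^ n"
proof -
  define Q where "Q \<sigma> \<longleftrightarrow> (\<forall>i<n. A i (\<sigma> i) = 1)" for \<sigma> :: "nat \<Rightarrow> nat"
  have fin: "finite {\<sigma>. \<sigma> permutes {..<n}}" by (simp add: finite_permutations)
  have p: "(\<Prod>i<n. A i (\<sigma> i) / real r) = (if Q \<sigma> then 1 else 0) / real r ^ n"
    if s: "\<sigma> permutes {..<n}" for \<sigma>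
  proof -
    have "(\<Prod>i<n. A i (\<sigma> i) / real r) = (\<Prod>i<n. A i (\<sigma> i)) / (\<Prod>i<n. real r)"
      by (rule prod_dividef)
    also have "(\<Prod>i<n. A i (\<sigma> i)) = (if Q \<sigma> then 1 else 0)"
    proof (cases "Q \<sigma>")
      case True then show ?thesis by (simp add: Q_def)
    next
      case False
      then obtain i where i: "i < n" "A i (\<sigma> i) \<noteq> 1" by (auto simp: Q_def)
      have "\<sigma> i < n" using permutes_in_image[OF s] i by simp
      then have "A i (\<sigma> i) = 0" using A01 i by blast
      then have "(\<Prod>i<n. A i (\<sigma> i)) = 0" using i by (intro prod_zero) auto
      then show ?thesis using False by simp
    qed
    finally show ?thesis by simp
  qed
  have "per n (\<lambda>i j. A i j / real r) = (\<Sum>\<sigma> | \<sigma> permutes {..<n}. (if Q \<sigma> then 1 else 0) / real r ^ n)"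
    unfolding per_def by (rule sum.cong) (simp_all add: p)
  also have "\<dots> = (\<Sum>\<sigma> | \<sigma> permutes {..<n}. (if Q \<sigma> then 1 else 0)) / real r ^ n"
    by (simp add: sum_divide_distrib)
  also have "(\<Sum>\<sigma> | \<sigma> permutes {..<n}. (if Q \<sigma> then 1 else 0)) = (\<Sum>\<sigma>\<in>{\<sigma>\<in>{\<sigma>. \<sigma> permutes {..<n}}. Q \<sigma>}. (1::real))"
    using fin by (subst sum.inter_filter) simp_all
  also have "{\<sigma>\<in>{\<sigma>. \<sigma> permutes {..<n}}. Q \<sigma>} = {\<sigma>. \<sigma> permutes {..<n} \<and> (\<forall>i<n. A i (\<sigma> i) = 1)}"
    by (auto simp: Q_def)
  finally show ?thesis by simp
qed

lemma perms_le_Mset: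
  "card {\<sigma>. \<sigma> permutes {..<n} \<and> (\<forall>i<n. A i (\<sigma> i) = 1)}
     \<le> card (Mset (\<lambda>i j. A i j = 1) {..<n} {..<n})"
proof (rule card_inj_on_le[of "\<lambda>\<sigma>. restrict \<sigma> {..<n}"])
  show "finite (Mset (\<lambda>i j. A i j = 1) {..<n} {..<n})" by (simp add: finite_Mset)
  show "inj_on (\<lambda>\<sigma>. restrict \<sigma> {..<n}) {\<sigma>. \<sigma> permutes {..<n} \<and> (\<forall>i<n. A i (\<sigma> i) = 1)}"
  proof (rule inj_onI)
    fix \<sigma> \<tau> assume s: "\<sigma> \<in> {\<sigma>. \<sigma> permutes {..<n} \<and> (\<forall>i<n. A i (\<sigma> i) = 1)}"
      and t: "\<tau> \<in> {\<sigma>. \<sigma> permutes {..<n} \<and> (\<forall>i<n. A i (\<sigma> i) = 1)}"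
      and e: "restrict \<sigma> {..<n} = restrict \<tau> {..<n}"
    show "\<sigma> = \<tau>"
    proof
      fix x show "\<sigma> x = \<tau> x"
      proof (cases "x < n")
        case True then show ?thesis using fun_cong[OF e, of x] by simp
      next
        case False
        then have "\<sigma> x = x" "\<tau> x = x" using s t by (auto intro: permutes_not_in)
        then show ?thesis by simp
      qed
    qed
  qed
  show "(\<lambda>\<sigma>. restrict \<sigma> {..<n}) ` {\<sigma>. \<sigma> permutes {..<n} \<and> (\<forall>i<n. A i (\<sigma> i) = 1)}
          \<subseteq> Mset (\<lambda>i j. A i j = 1) {..<n} {..<n}"
  proof safe
    fix \<sigma> assume s: "\<sigma> permutes {..<n}" and aa: "\<forall>i<n. A i (\<sigma> i) = 1"
    have b: "bij_betw \<sigma> {..<n} {..<n}" by (rule permutes_imp_bij[OF s])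
    have b2: "bij_betw (restrict \<sigma> {..<n}) {..<n} {..<n}"
      by (rule bij_betw_cong[THEN iffD1, OF _ b]) simp
    have "restrict \<sigma> {..<n} \<in> {..<n} \<rightarrow>\<^sub>E {..<n}"
      using permutes_in_image[OF s] by auto
    then show "restrict \<sigma> {..<n} \<in> Mset (\<lambda>i j. A i j = 1) {..<n} {..<n}"
      using b2 aa unfolding Mset_def by auto
  qed
qed

lemma card_ones:
  fixes A :: "nat \<Rightarrow> nat \<Rightarrow> real" and n :: nat
  assumes A01: "\<forall>j<n. A i j = 0 \<or> A i j = 1"
  shows "real (card {k\<in>{..<n}. A i k = 1}) = (\<Sum>j<n. A i j)"
proof -
  have "(\<Sum>j<n. A i j) = (\<Sum>j<n. if A i j = 1 then 1 else 0)"
    by (rule sum.cong) (use A01 in auto)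
  also have "\<dots> = (\<Sum>j\<in>{k\<in>{..<n}. A i k = 1}. (1::real))"
    by (subst sum.inter_filter) simp_all
  finally show ?thesis by simp
qed

theorem mainTheorem9:
  fixes r n :: nat and A :: "nat \<Rightarrow> nat \<Rightarrow> real"
  assumes "1 \<le> r" and "r \<le> n" and "A \<in> RB r n"
  shows "per n (\<lambda>i j. A i j / real r) \<le> sqrt 2 ^ n * F n (\<lambda>i j. A i j / real r)"
proof -
  have r: "r \<ge> 1" by (rule assms(1))
  have A01: "\<forall>i<n. \<forall>j<n. A i j = 0 \<or> A i j = 1" and rows: "\<forall>i<n. (\<Sum>j<n. A i j) = real r"
    using assms(3) by (auto simp: RB_def)
  define a where "a = (\<lambda>i j. A i j = 1)"
  have rsr: "rs a j {..<n} = r" if j: "j < n" for j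
  proof -
    have "real (rs a j {..<n}) = real r"
      unfolding rs_def a_def using card_ones[of n A j] A01 rows j by simp
    then show ?thesis by simp
  qed
  define s where "s = selfpow (1 - 1 / real r)"
  have B: "real (card (Mset a {..<n} {..<n})) \<le> exp (\<Sum>j<n. G (rs a j {..<n}))"
    by (rule bregman) simp_all
  also have "(\<Sum>j<n. G (rs a j {..<n})) = real n * G r" by (simp add: rsr)
  also have "exp (real n * G r) = exp (G r) ^ n" by (rule exp_of_nat_mult)
  finally have B2: "real (card (Mset a {..<n} {..<n})) \<le> exp (G r) ^ n" .
  have perle: "per n (\<lambda>i j. A i j / real r) \<le> exp (G r) ^ n / real r ^ n"
  proof -
    have "per n (\<lambda>i j. A i j / real r) =
      real (card {\<sigma>. \<sigma> permutes {..<n} \<and> (\<forall>i<n. A i (\<sigma> i) = 1)}) / real r ^ n"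
      by (rule per_eq[OF r A01])
    also have "\<dots> \<le> real (card (Mset a {..<n} {..<n})) / real r ^ n"
      using perms_le_Mset[of n A] r unfolding a_def by (intro divide_right_mono) simp_all
    also have "\<dots> \<le> exp (G r) ^ n / real r ^ n"
      using B2 r by (intro divide_right_mono) simp_all
    finally show ?thesis .
  qed
  have Feq: "F n (\<lambda>i j. A i j / real r) = (s ^ r) ^ n"
  proof -
    have row: "(\<Prod>j<n. selfpow (1 - A i j / real r)) = s ^ r" if i: "i < n" for i
    proof -
      have "(\<Prod>j<n. selfpow (1 - A i j / real r)) = (\<Prod>j<n. if A i j = 1 then s else 1)"
      proof (rule prod.cong[OF refl])
        fix j assume "j \<in> {..<n}"
        then have "A i j = 0 \<or> A i j = 1" using A01 i by auto
        then show "selfpow (1 - A i j / real r) = (if A i j = 1 then s else 1)"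
          by (auto simp: s_def selfpow_def)
      qed
      also have "\<dots> = (\<Prod>j\<in>{k\<in>{..<n}. A i k = 1}. s)"
        by (subst prod.inter_filter) simp_all
      also have "\<dots> = s ^ card {k\<in>{..<n}. A i k = 1}" by simp
      also have "card {k\<in>{..<n}. A i k = 1} = r"
        using card_ones[of n A i] A01 rows i by (metis of_nat_eq_iff)
      finally show ?thesis .
    qed
    have "F n (\<lambda>i j. A i j / real r) = (\<Prod>i<n. s ^ r)"
      unfolding F_def by (rule prod.cong[OF refl]) (simp add: row)
    then show ?thesis by simp
  qed
  have k: "exp (G r) / real r \<le> sqrt 2 * s ^ r"
  proof -
    have "exp (G r) \<le> real r * sqrt 2 * s ^ r" unfolding s_def by (rule key[OF r])
    moreover have "real r * sqrt 2 * s ^ r = sqrt 2 * s ^ r * real r" by simp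
    ultimately have "exp (G r) \<le> sqrt 2 * s ^ r * real r" by linarith
    then show ?thesis using r by (subst pos_divide_le_eq) simp_all
  qed
  have "exp (G r) ^ n / real r ^ n = (exp (G r) / real r) ^ n" by (simp add: power_divide)
  also have "\<dots> \<le> (sqrt 2 * s ^ r) ^ n"
    by (rule power_mono[OF k]) simp
  also have "\<dots> = sqrt 2 ^ n * F n (\<lambda>i j. A i j / real r)" by (simp add: Feq power_mult_distrib)
  finally show ?thesis using perle by linarith
qed

end
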